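(* For every $\gamma>0$, $2\arctan\gamma<\min\{\eta^{-1}(\gamma),\pi\}$.
   Context: Let $\psi(\theta)=\frac{\theta-\sin\theta}{1-\cos\theta}$ and $A(\theta)=\frac{\theta\cos\frac\theta2-2\sin\frac\theta2}{\theta-\sin\theta}$ for $0<\theta<2\pi$. The function $\eta(\theta)=\psi(\theta)(1-A(\theta))$ is a strictly increasing bijection of $(0,2\pi)$ onto $(0,\infty)$, and $\eta^{-1}$ denotes its inverse. *)

theory Defs
  imports "HOL-Analysis.Analysis"
begin

definition psi :: "real \<Rightarrow> real" where
  "psi \<theta> = (\<theta> - sin \<theta>) / (1 - cos \<theta>)"

definition A :: "real \<Rightarrow> real" where
  "A \<theta> = (\<theta> * cos (\<theta>/2) - 2 * sin (\<theta>/2)) / (\<theta> - sin \<theta>)"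

definition eta :: "real \<Rightarrow> real" where
  "eta \<theta> = psi \<theta> * (1 - A \<theta>)"

text \<open>Inverse of eta, viewed as a bijection of (0, 2 pi) onto (0, infinity).\<close>
definition eta_inv :: "real \<Rightarrow> real" where
  "eta_inv \<gamma> = (THE \<theta>. \<theta> \<in> {0<..<2*pi} \<and> eta \<theta> = \<gamma>)"

end

theory Submission
  imports Defs
begin

definition ff :: "real \<Rightarrow> real" where
  "ff t = (t + sin t) / (1 + cos t)"

lemma eta_ff:
  assumes "0 < \<theta>" "\<theta> < 2*pi"
  shows "eta \<theta> = ff (\<theta>/2)"
proof -
  define t where "t = \<theta>/2"
  have th: "\<theta> = 2*t" using t_def by simp
  have t0: "0 < t" "t < pi" using assms t_def by auto
  have st: "sin t > 0" using t0 sin_gt_zero by auto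
  have ct: "1 + cos t > 0" using t0 cos_gt_neg1 by (smt (verit) cos_ge_minus_one cos_pi cos_mono_less_eq)
  have sin2: "sin \<theta> = 2 * sin t * cos t" using th sin_double by simp
  have c1: "cos t < 1" using cos_mono_less_eq[of t 0] t0 by simp
  have d1: "\<theta> - sin \<theta> > 0"
  proof -
    have "sin t * cos t < sin t" using st c1 by simp
    moreover have "sin t \<le> t" using sin_x_le_x t0 by simp
    ultimately show ?thesis using sin2 th by linarith
  qed
  have cos2: "cos \<theta> = 1 - 2 * (sin t)^2" using th cos_double_sin by simp
  have ss: "(sin t)^2 = (1 - cos t) * (1 + cos t)" using sin_cos_squared_add[of t]
    by (simp add: algebra_simps power2_eq_square)
  have d2: "1 - cos \<theta> = 2 * (sin t)^2" using cos2 by simp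
  have nz: "1 - cos \<theta> \<noteq> 0" using d2 st by simp
  have "eta \<theta> = ((\<theta> - sin \<theta>) - (\<theta> * cos t - 2 * sin t)) / (1 - cos \<theta>)"
  proof -
    have gen: "P / Q * (1 - X / P) = (P - X) / Q" if "P \<noteq> 0" for P Q X :: real
      using that by (cases "Q = 0") (simp_all add: field_simps)
    show ?thesis unfolding eta_def psi_def A_def t_def[symmetric]
      using gen[of "\<theta> - sin \<theta>" "1 - cos \<theta>" "\<theta> * cos t - 2 * sin t"] d1 by linarith
  qed
  also have "\<dots> = (2 * (1 - cos t) * (t + sin t)) / (2 * ((1 - cos t) * (1 + cos t)))"
    using sin2 d2 ss th by (simp add: algebra_simps)
  also have "\<dots> = (t + sin t) / (1 + cos t)"
  proof -
    have "1 - cos t > 0" using c1 by simp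
    then have "(1 - cos t) \<noteq> 0" by simp
    then show ?thesis by (simp only: mult.assoc mult_divide_mult_cancel_left_if) simp
  qed
  finally show ?thesis unfolding ff_def t_def .
qed

lemma ff_mono:
  assumes "0 < a" "a < b" "b < pi"
  shows "ff a < ff b"
proof -
  have "\<exists>z>a. z < b \<and> (b + sin b) - (a + sin a) = (b - a) * (1 + cos z)"
    by (rule MVT2) (auto intro!: derivative_eq_intros assms(2))
  then obtain z where "(b + sin b) - (a + sin a) = (b - a) * (1 + cos z)" by blast
  moreover have "1 + cos z \<ge> 0" using cos_ge_minus_one[of z] by linarith
  ultimately have N: "a + sin a \<le> b + sin b" using assms by (smt (verit) mult_nonneg_nonneg)
  have Nb: "b + sin b > 0" using sin_gt_zero[of b] assms by auto
  have D: "cos b < cos a" using cos_mono_less_eq[of b a] assms by auto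
  have Db: "1 + cos b > 0" using cos_mono_less_eq[of pi b] assms by auto
  have "ff a \<le> (b + sin b) / (1 + cos a)" unfolding ff_def
    using N Db D by (intro divide_right_mono) auto
  also have "\<dots> < (b + sin b) / (1 + cos b)"
    using Nb Db D by (intro divide_strict_left_mono) auto
  finally show ?thesis unfolding ff_def .
qed

lemma ff_cont: "continuous_on {a..b} ff" if "0 < a" "b < pi" for a b
proof -
  have "\<forall>t\<in>{a..b}. 1 + cos t \<noteq> 0"
  proof
    fix t assume "t \<in> {a..b}"
    then have "0 \<le> t" "t < pi" using that by auto
    then show "1 + cos t \<noteq> 0" using cos_mono_less_eq[of pi t] by auto
  qed
  then show ?thesis unfolding ff_def by (intro continuous_intros) auto
qed

lemma arctan_lt: "0 < x \<Longrightarrow> arctan x < x"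
proof -
  assume x: "0 < x"
  have "\<exists>z>0. z < x \<and> arctan x - arctan 0 = (x - 0) * inverse (1 + z^2)"
    by (rule MVT2) (auto intro!: x DERIV_arctan)
  then obtain z where z: "z > 0" "arctan x = x * inverse (1 + z^2)" by auto
  have "inverse (1 + z^2) < 1" using z by (simp add: inverse_less_1_iff)
  then show ?thesis using z x by simp
qed

lemma ff_arctan: assumes "0 < g" shows "ff (arctan g) < g"
proof -
  define t where "t = arctan g"
  have t: "0 < t" "t < pi/2" using assms arctan_ubound t_def by auto
  have c: "cos t > 0" using t cos_gt_zero by auto
  have tan: "sin t = g * cos t" using tan_arctan[of g] c unfolding t_def[symmetric] tan_def by (simp add: field_simps)
  have "t < g" using arctan_lt assms t_def by simp
  then have "t + sin t < g * (1 + cos t)" using tan by (simp add: algebra_simps)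
  then show ?thesis unfolding ff_def t_def[symmetric] using c
    by (simp add: divide_less_eq add_pos_pos)
qed

lemma exists_big: assumes "0 < g" shows "\<exists>t. pi/2 < t \<and> t < pi \<and> g < ff t"
proof -
  define c where "c = - g / (g + 1)"
  have c: "-1 < c" "c < 0" using assms by (auto simp: c_def field_simps)
  define t where "t = arccos c"
  have ct: "cos t = c" using c t_def by simp
  have tb: "0 < t" "t < pi" using arccos_lt_bounded[of c] c t_def by auto
  have "pi/2 < t"
  proof (rule ccontr)
    assume "\<not> pi/2 < t"
    then have "cos t \<ge> 0" using tb cos_ge_zero by auto
    then show False using ct c by simp
  qed
  have dd: "1 + cos t = 1 / (g + 1)" using ct assms by (simp add: c_def field_simps)
  have "sin t \<ge> 0" using tb sin_ge_zero by auto
  then have "t + sin t > 1" using \<open>pi/2 < t\<close> pi_gt3 by linarith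
  then have "(g+1) * 1 < (g+1) * (t + sin t)" using assms by (intro mult_strict_left_mono) auto
  then have "ff t > (g + 1)" unfolding ff_def dd using assms by (simp add: field_simps)
  then show ?thesis using \<open>pi/2 < t\<close> tb by (intro exI[of _ t]) auto
qed

theorem lemma4p2:
  fixes \<gamma> :: real
  assumes "\<gamma> > 0"
  shows "2 * arctan \<gamma> < min (eta_inv \<gamma>) pi"
proof -
  define t0 where "t0 = arctan \<gamma>"
  have t0: "0 < t0" "t0 < pi/2" using assms arctan_ubound t0_def by auto
  obtain t1 where t1: "pi/2 < t1" "t1 < pi" "\<gamma> < ff t1" using exists_big assms by blast
  have "\<exists>x. t0 \<le> x \<and> x \<le> t1 \<and> ff x = \<gamma>"
    using ff_arctan[OF assms] t0 t1 ff_cont[of t0 t1] unfolding t0_def[symmetric]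
    by (intro IVT') auto
  then obtain x where x: "t0 \<le> x" "x \<le> t1" "ff x = \<gamma>" by auto
  have ex: "2*x \<in> {0<..<2*pi} \<and> eta (2*x) = \<gamma>" using x t0 t1 eta_ff[of "2*x"] by auto
  have uniq: "\<theta> = 2*x" if "\<theta> \<in> {0<..<2*pi} \<and> eta \<theta> = \<gamma>" for \<theta>
  proof -
    have e: "ff (\<theta>/2) = ff x" using that eta_ff[of \<theta>] x by auto
    have "\<theta>/2 = x"
    proof (rule ccontr)
      assume "\<theta>/2 \<noteq> x"
      then consider "\<theta>/2 < x" | "x < \<theta>/2" by linarith
      then show False
        using ff_mono[of "\<theta>/2" x] ff_mono[of x "\<theta>/2"] that x t0 t1 e by (cases; auto)
    qed
    then show ?thesis by simp
  qed
  have "eta_inv \<gamma> = 2*x" unfolding eta_inv_def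
    using ex uniq by (intro the_equality) auto
  moreover have "t0 < x"
  proof (rule ccontr)
    assume "\<not> t0 < x" then have "x = t0" using x by simp
    then show False using ff_arctan[OF assms] x t0_def by simp
  qed
  ultimately show ?thesis using t0 t0_def by simp
qed

end
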